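(* Let $b>1$, $p\ge1$, $R\subseteq\{0,\ldots,p-1\}$ and let $I\subseteq\mathbb{N}$ be finite and non-empty. Let $k$ be the greatest divisor of $p$ coprime with $b$ and $d=p/k$. A state $s$ of $\mathcal{C}_{R,p,I}$ belongs to a $0$-circuit if and only if either $s$ is the initial state, or $s=(xd,\bot)$ for some $x\in\{0,\ldots,k-1\}$.
   Context: $A_b=\{0,\ldots,b-1\}$. $\mathcal{A}_{R,p}$: states $\{0,\ldots,p-1\}$, initial $0$, final $R$, transitions $n\xrightarrow{a}(nb+a)\bmod p$. With $m=\max I$, $\mathcal{B}_I$: states $\{0,\ldots,m\}\cup\{\bot\}$, initial $0$, final $I$, transitions $i\xrightarrow{a}ib+a$ if $ib+a\le m$, else $i\xrightarrow{a}\bot$, and $\bot\xrightarrow{a}\bot$. $\mathcal{C}_{R,p,I}$ is the accessible part (states reachable from the initial state $(0,0)$) of the product of $\mathcal{A}_{R,p}$ and $\mathcal{B}_I$, with transitions $(s,t)\xrightarrow{a}(s',t')$ iff $s\xrightarrow{a}s'$ and $t\xrightarrow{a}t'$, and $(s,t)$ final iff exactly one of $s\in R$, $t\in I$ holds. A $0$-circuit is a circuit all of whose transitions are labelled $0$. *)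

theory Defs
  imports Main
begin

(* States of B_I: Some i for i in {0..m}, None for the sink state \<bottom>. *)

definition A_step :: "nat \<Rightarrow> nat \<Rightarrow> nat \<Rightarrow> nat \<Rightarrow> nat" where
  "A_step b p n a = (n * b + a) mod p"

definition B_step :: "nat \<Rightarrow> nat set \<Rightarrow> nat option \<Rightarrow> nat \<Rightarrow> nat option" where
  "B_step b I t a = (case t of None \<Rightarrow> None
      | Some i \<Rightarrow> (if i * b + a \<le> Max I then Some (i * b + a) else None))"

definition C_step :: "nat \<Rightarrow> nat \<Rightarrow> nat set \<Rightarrow> nat \<times> nat option \<Rightarrow> nat \<Rightarrow> nat \<times> nat option" where
  "C_step b p I st a = (A_step b p (fst st) a, B_step b I (snd st) a)"

definition C_init :: "nat \<times> nat option" where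
  "C_init = (0, Some 0)"

inductive_set C_states :: "nat \<Rightarrow> nat \<Rightarrow> nat set \<Rightarrow> (nat \<times> nat option) set"
  for b p I where
  init: "C_init \<in> C_states b p I"
| step: "st \<in> C_states b p I \<Longrightarrow> a < b \<Longrightarrow> C_step b p I st a \<in> C_states b p I"

definition C_final :: "nat set \<Rightarrow> nat set \<Rightarrow> nat \<times> nat option \<Rightarrow> bool" where
  "C_final R I st = ((fst st \<in> R) \<noteq> (case snd st of None \<Rightarrow> False | Some i \<Rightarrow> i \<in> I))"

definition on_zero_circuit :: "nat \<Rightarrow> nat \<Rightarrow> nat set \<Rightarrow> nat \<times> nat option \<Rightarrow> bool" where
  "on_zero_circuit b p I st =
     (st \<in> C_states b p I \<and> (\<exists>n\<ge>1. ((\<lambda>q. C_step b p I q 0) ^^ n) st = st))"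

end

theory Submission
  imports Defs "HOL-Number_Theory.Number_Theory"
begin

lemma fpow_None:
  assumes "a < p"
  shows "((\<lambda>q. C_step b p I q 0) ^^ n) (a, None) = (a * b ^ n mod p, None)"
  using assms
proof (induction n)
  case 0 then show ?case by simp
next
  case (Suc n)
  then show ?case
    by (simp add: C_step_def A_step_def B_step_def mod_mult_right_eq ac_simps)
qed

lemma fpow_Some:
  "snd (((\<lambda>q. C_step b p I q 0) ^^ n) (a, Some i)) = None \<or>
   snd (((\<lambda>q. C_step b p I q 0) ^^ n) (a, Some i)) = Some (i * b ^ n)"
proof (induction n)
  case 0 then show ?case by simp
next
  case (Suc n)
  then show ?case
    by (auto simp add: C_step_def A_step_def B_step_def mult.assoc mult.commute)
qed

lemma states_inv:
  assumes "st \<in> C_states b p I" "p \<ge> 1"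
  shows "fst st < p \<and> (snd st = Some 0 \<longrightarrow> fst st = 0)"
  using assms
proof (induction rule: C_states.induct)
  case init then show ?case by (simp add: C_init_def)
next
  case (step st a)
  then show ?case
    by (cases "snd st") (auto simp add: C_step_def A_step_def B_step_def)
qed

lemma split_coprime:
  fixes b :: nat
  shows "d > 0 \<Longrightarrow> \<exists>d1 d2 N. d = d1 * d2 \<and> d2 dvd b ^ N \<and> coprime d1 b"
proof (induction d rule: less_induct)
  case (less d)
  show ?case
  proof (cases "coprime d b")
    case True
    then show ?thesis by (intro exI[of _ d] exI[of _ 1] exI[of _ 0]) auto
  next
    case False
    define g where "g = gcd d b"
    have g1: "g > 1" using False less.prems unfolding g_def
      by (metis coprime_iff_gcd_eq_1 gcd_pos_nat less_one nat_neq_iff)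
    obtain d' where d': "d = g * d'" unfolding g_def by (meson gcd_dvd1 dvdE)
    have "d' > 0" using d' less.prems by auto
    have "d' < d" using d' g1 \<open>d' > 0\<close> by simp
    then obtain d1 d2 N where h: "d' = d1 * d2" "d2 dvd b ^ N" "coprime d1 b"
      using less.IH \<open>d' > 0\<close> by blast
    have "g * d2 dvd b ^ Suc N" using h(2) unfolding g_def
      by (simp add: mult_dvd_mono)
    then show ?thesis using d' h
      by (intro exI[of _ d1] exI[of _ "g * d2"] exI[of _ "Suc N"]) (auto simp: ac_simps)
  qed
qed

theorem lemma38:
  fixes b p k d :: nat and R I :: "nat set" and s :: "nat \<times> nat option"
  assumes "b > 1" and "p \<ge> 1" and "R \<subseteq> {0..<p}"
    and "finite I" and "I \<noteq> {}"
    and "k = (GREATEST k. k dvd p \<and> coprime k b)"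
    and "d = p div k"
    and "s \<in> C_states b p I"
  shows "on_zero_circuit b p I s \<longleftrightarrow>
           (s = C_init \<or> (\<exists>x<k. s = (x * d, None)))"
proof -
  define f where "f = (\<lambda>q. C_step b p I q 0)"
  have bound: "\<forall>y. y dvd p \<and> coprime y b \<longrightarrow> y \<le> p"
    using assms(2) by (auto intro: dvd_imp_le)
  have kP: "k dvd p \<and> coprime k b"
    unfolding assms(6) by (rule GreatestI_nat[of _ 1]) (use bound in auto)
  have kmax: "\<And>y. y dvd p \<Longrightarrow> coprime y b \<Longrightarrow> y \<le> k"
    unfolding assms(6) by (rule Greatest_le_nat) (use bound in auto)
  have pkd: "p = k * d" using kP assms(7) by simp
  have kpos: "k > 0" "d > 0" using pkd assms(2) by auto
  have inv: "fst s < p" "snd s = Some 0 \<longrightarrow> fst s = 0"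
    using states_inv[OF assms(8) assms(2)] by auto
  have dpow: "\<exists>N. d dvd b ^ N"
  proof -
    obtain d1 d2 N where h: "d = d1 * d2" "d2 dvd b ^ N" "coprime d1 b"
      using split_coprime[OF kpos(2)] by blast
    have "k * d1 dvd p" using pkd h(1) by simp
    moreover have "coprime (k * d1) b" using kP h(3) by simp
    ultimately have "k * d1 \<le> k" using kmax by blast
    moreover have "d1 > 0" using h(1) kpos by auto
    ultimately have "d1 = 1" using kpos by (metis less_one mult_le_cancel1 mult.right_neutral nat_less_le)
    then show ?thesis using h by auto
  qed
  show ?thesis
  proof
    assume "on_zero_circuit b p I s"
    then obtain n where n: "n \<ge> 1" "(f ^^ n) s = s"
      unfolding on_zero_circuit_def f_def by blast
    obtain a t where s: "s = (a, t)" by (cases s)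
    show "s = C_init \<or> (\<exists>x<k. s = (x * d, None))"
    proof (cases t)
      case (Some i)
      show ?thesis
      proof (cases "i = 0")
        case True
        then show ?thesis using inv s Some by (simp add: C_init_def)
      next
        case False
        have "b ^ n > 1" using assms(1) n(1) using one_less_power by (metis One_nat_def less_le_trans n(1) zero_less_one)
        hence "i * b ^ n \<noteq> i" using False by (metis mult.right_neutral mult_left_cancel nat_neq_iff)
        have "snd ((f ^^ n) (a, Some i)) = Some i" using n(2) s Some by simp
        moreover have "snd ((f ^^ n) (a, Some i)) = None \<or> snd ((f ^^ n) (a, Some i)) = Some (i * b ^ n)"
          unfolding f_def by (rule fpow_Some)
        ultimately have False using \<open>i * b ^ n \<noteq> i\<close> by (metis option.distinct(1) option.inject)
        then show ?thesis by blast
      qed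
    next
      case None
      have ap: "a < p" using inv s by simp
      have per: "a * b ^ n mod p = a" using n(2) fpow_None[OF ap, where b=b and I=I and n=n] s None
        unfolding f_def by simp
      have perj: "a * b ^ (n * j) mod p = a" for j
      proof (induction j)
        case 0 then show ?case using ap by simp
      next
        case (Suc j)
        have "a * b ^ (n * Suc j) mod p = (a * b ^ (n * j)) * b ^ n mod p"
          by (simp add: power_add ac_simps)
        also have "\<dots> = ((a * b ^ (n * j)) mod p) * b ^ n mod p"
          by (simp add: mod_mult_left_eq)
        also have "\<dots> = a" using Suc per by simp
        finally show ?case .
      qed
      obtain N where N: "d dvd b ^ N" using dpow by blast
      have "b ^ N dvd b ^ (n * N)" using n(1) by (simp add: le_imp_power_dvd)
      hence dd: "d dvd a * b ^ (n * N)" using N by (meson dvd_mult dvd_trans)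
      have "d dvd p" using pkd by simp
      hence "a * b ^ (n * N) mod p mod d = a * b ^ (n * N) mod d"
        by (simp add: mod_mod_cancel)
      hence "a mod d = a * b ^ (n * N) mod d" using perj[of N] by simp
      hence "a mod d = 0" using dd by (simp add: dvd_eq_mod_eq_0)
      then obtain x where x: "a = x * d" by (metis mod_eq_0_iff_dvd dvdE mult.commute)
      have "x < k" using ap x pkd kpos by (simp add: mult.commute)
      then show ?thesis using s None x by blast
    qed
  next
    assume "s = C_init \<or> (\<exists>x<k. s = (x * d, None))"
    then show "on_zero_circuit b p I s"
    proof
      assume "s = C_init"
      then show ?thesis using assms(8) unfolding on_zero_circuit_def
        by (intro conjI exI[of _ 1]) (auto simp: C_init_def C_step_def A_step_def B_step_def)
    next
      assume "\<exists>x<k. s = (x * d, None)"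
      then obtain x where x: "x < k" "s = (x * d, None)" by blast
      define t where "t = totient k"
      have t1: "t \<ge> 1" using kpos by (simp add: t_def Suc_le_eq)
      have e: "b ^ t mod k = 1 mod k"
        using euler_theorem[of b k] kP unfolding t_def cong_def
        by (simp add: coprime_commute)
      have xp: "x * d < p" using x pkd kpos by simp
      have "x * d * b ^ t mod p = (x * b ^ t mod k) * d"
        using pkd by (simp add: ac_simps mod_mult_mult2)
      also have "x * b ^ t mod k = x * (b ^ t mod k) mod k" by (simp add: mod_mult_right_eq)
      also have "\<dots> = x * (1 mod k) mod k" using e by (simp only:)
      also have "\<dots> = x" using x(1) by (metis mod_mult_right_eq mod_less mult.right_neutral)
      finally have "x * d * b ^ t mod p = x * d" .
      moreover have "((\<lambda>q. C_step b p I q 0) ^^ t) s = (x * d * b ^ t mod p, None)"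
        using x(2) fpow_None[OF xp, where b=b and I=I and n=t] by simp
      ultimately show ?thesis using assms(8) x(2) t1
        unfolding on_zero_circuit_def by (intro conjI exI[of _ t]) simp_all
    qed
  qed
qed

end
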